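(* Let $q(w)=w^4$, $\psi(w)=\frac{iw+1}{w+i}$, $\Psi[z:w:t]=[z:iw+t:it+w]$ (an automorphism of $\mathbb{P}^2$), and $X:=\{[z:w:t]\in\mathbb{P}^2:z=0\}$. Let $R>0$, $\epsilon_0>0$, $l\ge1$ and open neighborhoods $U_1^l,U_2^l,U_3^l$ of $r_1=1,r_2=e^{2i\pi/3},r_3=e^{4i\pi/3}$ be as in the context. There exist $\tilde l\ge1$ and $\tilde\lambda>1$ such that for each $\alpha\in\mathbb{C}^*$, if $\eta\in\mathbb{C}^*$ is sufficiently close to $0$, then the map $F_\eta(z,w):=(\tilde\lambda z+\eta q^{\tilde l}(z),q^{\tilde l}(w))$ (as an endomorphism of $\mathbb{P}^2$) satisfies $$X\cup\overline{(\alpha\epsilon_0^{-1}\mathbb{D})\times\textstyle\bigcup_{i=1}^3U_i^l}\subset F_\eta\circ\Psi\Big((\alpha\epsilon_0^{-1}\mathbb{D})\times(R\mathbb{D}\setminus R^{-1}\mathbb{D})\Big).$$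
   Context: Setting: $R>0$ is large enough that $\psi^{-1}(\{r_1,r_2,r_3\})\subset R\mathbb{D}\setminus R^{-1}\mathbb{D}$; $\epsilon_0>0$ and the neighborhoods $U_i^l$ of $r_i$ are those given (for this $R$) by the statement: there exist $0<\lambda<1$, $\epsilon_0>0$, $l_0$ and neighborhoods $(U_i^l)_{l\ge l_0}$ of $r_i$ with exponentially shrinking diameters such that for all $l\ge l_0$, $\alpha\in\mathbb{C}^*$, the map $(z,w)\mapsto(\lambda z+\alpha w,w^{4^l})$ maps $(\alpha\epsilon_0^{-1}\mathbb{D})\times\bigcup_iU_i^l$ onto a set containing $\overline{(\alpha\epsilon_0^{-1}\mathbb{D})\times(R\mathbb{D}\setminus R^{-1}\mathbb{D})}$; and $l\ge l_0$ is chosen with $\overline{\bigcup_{i=1}^3(U_i^l\cup\psi^{-1}(U_i^l))}\subset R\mathbb{D}\setminus R^{-1}\mathbb{D}$. Subsets of $\mathbb{C}^2$ are viewed in $\mathbb{P}^2$ via $(z,w)\mapsto[z:w:1]$. $\mathbb{D}$ is the unit disc. *)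

theory Defs
  imports "HOL-Analysis.Analysis"
begin

text \<open>Points of the projective plane P2 are represented by nonzero triples in C3
  (homogeneous coordinates); a subset of P2 is represented by its cone of
  nonzero representatives (closed under nonzero complex scaling).\<close>

type_synonym triple = "complex \<times> complex \<times> complex"

definition psi :: "complex \<Rightarrow> complex" where
  "psi w = (\<i> * w + 1) / (w + \<i>)"

definition rt :: "nat \<Rightarrow> complex" where
  "rt i = cis (2 * pi * (real i - 1) / 3)"

definition annulus :: "real \<Rightarrow> complex set" where
  "annulus R = ball 0 R - ball 0 (1 / R)"

definition Psi_hom :: "triple \<Rightarrow> triple" where
  "Psi_hom = (\<lambda>(z, w, t). (z, \<i> * w + t, \<i> * t + w))"

text \<open>Homogenisation (degree d = 4^lt) of F_eta(z,w) = (lam z + eta q^lt(z), q^lt(w)),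
  q(w) = w^4, so q^lt(w) = w^(4^lt).\<close>
definition F_hom :: "real \<Rightarrow> complex \<Rightarrow> nat \<Rightarrow> triple \<Rightarrow> triple" where
  "F_hom lam eta lt = (\<lambda>(z, w, t).
     (of_real lam * z * t ^ (4 ^ lt - 1) + eta * z ^ (4 ^ lt), w ^ (4 ^ lt), t ^ (4 ^ lt)))"

definition line_X_cone :: "triple set" where
  "line_X_cone = {(z, w, t). z = 0 \<and> (w, t) \<noteq> (0, 0)}"

definition affine_cone :: "(complex \<times> complex) set \<Rightarrow> triple set" where
  "affine_cone S = {(c * z, c * w, c) | c z w. c \<noteq> 0 \<and> (z, w) \<in> S}"

text \<open>Cone of the image in P2 of S (a subset of C2 viewed in P2) under the
  projective map induced by the homogeneous map G.\<close>
definition cone_image :: "(triple \<Rightarrow> triple) \<Rightarrow> (complex \<times> complex) set \<Rightarrow> triple set" where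
  "cone_image G S = {(c * a, c * b, c * e) | c a b e. c \<noteq> 0 \<and> (a, b, e) \<noteq> (0, 0, 0) \<and>
      (\<exists>z w. (z, w) \<in> S \<and> G (z, w, 1) = (a, b, e))}"

end

theory Submission
  imports Defs
begin

definition ipsi :: "complex \<Rightarrow> complex" where
  "ipsi z = (1 - \<i> * z) / (z - \<i>)"

lemma ipsi_plus: "z \<noteq> \<i> \<Longrightarrow> ipsi z + \<i> = 2 / (z - \<i>)"
  unfolding ipsi_def by (simp add: field_simps)

lemma ipsi_num: "z \<noteq> \<i> \<Longrightarrow> \<i> * ipsi z + 1 = 2 * z / (z - \<i>)"
  unfolding ipsi_def by (simp add: field_simps)

lemma psi_ipsi: "z \<noteq> \<i> \<Longrightarrow> psi (ipsi z) = z"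
proof -
  assume z: "z \<noteq> \<i>"
  hence d: "z - \<i> \<noteq> 0" by simp
  have "psi (ipsi z) = (2 * z / (z - \<i>)) / (2 / (z - \<i>))"
    unfolding psi_def ipsi_num[OF z] ipsi_plus[OF z] ..
  thus ?thesis using d by simp
qed

lemma ipsi_norm2: "z \<noteq> \<i> \<Longrightarrow> cmod (ipsi z) ^ 2 = ((1 + Im z)^2 + Re z ^ 2) / (Re z ^ 2 + (Im z - 1)^2)"
proof -
  have "cmod (ipsi z) ^ 2 = cmod (1 - \<i> * z) ^ 2 / cmod (z - \<i>) ^ 2"
    unfolding ipsi_def by (simp add: norm_divide power_divide)
  also have "\<dots> = ((1 + Im z)^2 + Re z ^ 2) / (Re z ^ 2 + (Im z - 1)^2)"
    unfolding cmod_power2 by (simp add: algebra_simps)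
  finally show ?thesis .
qed

lemma ipsi_plus_norm2: "z \<noteq> \<i> \<Longrightarrow> cmod (ipsi z + \<i>) ^ 2 = 4 / (Re z ^ 2 + (Im z - 1)^2)"
proof -
  assume z: "z \<noteq> \<i>"
  have "cmod (ipsi z + \<i>) ^ 2 = 4 / cmod (z - \<i>) ^ 2"
    unfolding ipsi_plus[OF z] by (simp add: norm_divide power_divide)
  also have "\<dots> = 4 / (Re z ^ 2 + (Im z - 1)^2)"
    unfolding cmod_power2 by (simp add: algebra_simps)
  finally show ?thesis .
qed

lemma sector_ne: "\<bar>Im z\<bar> \<le> Re z \<Longrightarrow> z \<noteq> \<i>" by auto

lemma sector_bounds:
  assumes s: "\<bar>Im z\<bar> \<le> Re z"
  shows "cmod (ipsi z) ^ 2 \<le> 6" "1/6 \<le> cmod (ipsi z) ^ 2" "cmod (ipsi z + \<i>) ^ 2 \<le> 8"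
proof -
  define x where "x = Re z" define y where "y = Im z"
  have xy: "y^2 \<le> x^2" using s unfolding x_def y_def
    by (metis abs_ge_zero abs_le_square_iff abs_of_nonneg order_trans)
  have e1: "(y-1)^2 = y^2 - 2*y + 1" "(1+y)^2 = y^2 + 2*y + 1"
    by (simp_all add: power2_eq_square algebra_simps)
  have e2: "(2*y-1)^2 = 4*y^2 - 4*y + 1" "(10*y-7)^2 = 100*y^2 - 140*y+49" "(10*y+7)^2 = 100*y^2 + 140*y+49"
    by (simp_all add: power2_eq_square algebra_simps)
  have q: "0 \<le> (2*y-1)^2" "0 \<le> (10*y-7)^2" "0 \<le> (10*y+7)^2" by simp_all
  have D: "x^2 + (y-1)^2 \<ge> 1/2" using xy e1 e2 q by linarith
  have n2: "cmod (ipsi z) ^ 2 = ((1+y)^2 + x^2) / (x^2 + (y-1)^2)"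
    using ipsi_norm2[OF sector_ne[OF s]] x_def y_def by simp
  have p2: "cmod (ipsi z + \<i>) ^ 2 = 4 / (x^2 + (y-1)^2)"
    using ipsi_plus_norm2[OF sector_ne[OF s]] x_def y_def by simp
  have "(1+y)^2 + x^2 \<le> 6 * (x^2 + (y-1)^2)" unfolding e1 using xy e2 q by (smt (verit))
  thus "cmod (ipsi z) ^ 2 \<le> 6" using n2 D by (simp add: divide_le_eq)
  have "(x^2 + (y-1)^2) \<le> 6 * ((1+y)^2 + x^2)" unfolding e1 using xy e2 q by (smt (verit))
  thus "1/6 \<le> cmod (ipsi z) ^ 2" using n2 D by (simp add: le_divide_eq)
  show "cmod (ipsi z + \<i>) ^ 2 \<le> 8" using p2 D by (simp add: divide_le_eq)
qed

lemma root4_sector: "\<exists>z. z ^ 4 = c \<and> \<bar>Im z\<bar> \<le> Re z"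
proof -
  define r where "r = csqrt (csqrt c)"
  have r4: "r ^ 4 = c" unfolding r_def
    by (metis power2_csqrt power_mult num_double numeral_times_numeral)
  have a: "(\<i> * r) ^ 4 = c" "(- r) ^ 4 = c" "(- \<i> * r) ^ 4 = c"
    using r4 by (simp_all add: power_mult_distrib)
  show ?thesis
  proof (cases "\<bar>Im r\<bar> \<le> \<bar>Re r\<bar>")
    case True
    show ?thesis
    proof (cases "Re r \<ge> 0")
      case True then show ?thesis using r4 \<open>\<bar>Im r\<bar> \<le> \<bar>Re r\<bar>\<close> by (intro exI[of _ r]) auto
    next
      case False then show ?thesis using a(2) \<open>\<bar>Im r\<bar> \<le> \<bar>Re r\<bar>\<close> by (intro exI[of _ "-r"]) auto
    qed
  next
    case False
    show ?thesis
    proof (cases "Im r \<ge> 0")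
      case True then show ?thesis using a(3) False by (intro exI[of _ "- \<i> * r"]) auto
    next
      case f: False then show ?thesis using a(1) False by (intro exI[of _ "\<i> * r"]) auto
    qed
  qed
qed

lemma R_big:
  assumes "psi -` {rt 1, rt 2, rt 3} \<subseteq> annulus R"
  shows "6 < R^2"
proof -
  define z where "z = rt 2"
  have z: "Re z = -1/2" "Im z = sqrt 3 / 2" unfolding z_def rt_def
    by (simp_all add: cos_120' sin_120' mult.commute)
  hence zi: "z \<noteq> \<i>" by auto
  have "ipsi z \<in> annulus R" using assms psi_ipsi[OF zi] z_def by auto
  hence lt: "cmod (ipsi z) < R" unfolding annulus_def by auto
  have s3: "sqrt 3 ^ 2 = 3" by simp
  have "cmod (ipsi z) ^ 2 = ((1 + sqrt 3/2)^2 + 1/4) / (1/4 + (sqrt 3/2 - 1)^2)"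
    using ipsi_norm2[OF zi] z by (simp add: power2_eq_square)
  also have "\<dots> = (2 + sqrt 3) / (2 - sqrt 3)"
    using s3 by (simp add: power2_eq_square algebra_simps add_divide_distrib)
  finally have eq: "cmod (ipsi z) ^ 2 = (2 + sqrt 3) / (2 - sqrt 3)" .
  have "sqrt 3 > 10/7" using real_less_rsqrt[of "10/7" 3] by (simp add: power2_eq_square)
  moreover have "sqrt 3 < 2" using real_sqrt_less_iff[of 3 4] by simp
  ultimately have "6 < (2 + sqrt 3) / (2 - sqrt 3)" by (simp add: less_divide_eq)
  hence "6 < cmod (ipsi z) ^ 2" using eq by simp
  also have "\<dots> < R^2" using lt by (simp add: power_strict_mono)
  finally show ?thesis .
qed


lemma cone_imageI:
  assumes "G (z, w, 1) = (a, b, e)" "(z, w) \<in> S" "(a, b, e) \<noteq> (0, 0, 0)" "k \<noteq> 0"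
    "p = (k * a, k * b, k * e)"
  shows "p \<in> cone_image G S"
  unfolding cone_image_def mem_Collect_eq
  apply (rule exI[of _ k], rule exI[of _ a], rule exI[of _ b], rule exI[of _ e])
  using assms by auto

lemma G_eval: "(F_hom 8 eta 1 \<circ> Psi_hom) (z, w, 1) =
   (8 * z * (\<i> + w) ^ 3 + eta * z ^ 4, (\<i> * w + 1) ^ 4, (\<i> + w) ^ 4)"
  by (simp add: F_hom_def Psi_hom_def)

lemma ipsi_annulus:
  assumes R6: "6 < R^2" and R0: "R > 0" and s: "\<bar>Im z\<bar> \<le> Re z"
  shows "ipsi z \<in> annulus R" "cmod (ipsi z + \<i>) < 3"
proof -
  note b = sector_bounds[OF s]
  have "cmod (ipsi z) ^ 2 < R ^ 2" using b(1) R6 by linarith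
  hence lt: "cmod (ipsi z) < R" using R0 less_imp_le power2_less_imp_less by blast
  have "(1/R)^2 = 1 / R^2" by (simp add: power_divide)
  also have "\<dots> < 1/6" using R6 by (simp add: divide_less_eq)
  finally have "(1/R) ^ 2 < cmod (ipsi z) ^ 2" using b(2) by linarith
  hence gt: "1/R < cmod (ipsi z)" using norm_ge_zero power2_less_imp_less by blast
  show "ipsi z \<in> annulus R" unfolding annulus_def using lt gt by simp
  have "cmod (ipsi z + \<i>) ^ 2 < 3 ^ 2" using b(3) by simp
  thus "cmod (ipsi z + \<i>) < 3" using power2_less_imp_less[of _ 3] by simp
qed

lemma psi_ipsi_eq: "\<bar>Im z\<bar> \<le> Re z \<Longrightarrow> \<i> * ipsi z + 1 = z * (\<i> + ipsi z)"
proof -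
  assume s: "\<bar>Im z\<bar> \<le> Re z"
  have ne: "ipsi z + \<i> \<noteq> 0" using ipsi_plus[OF sector_ne[OF s]] sector_ne[OF s] by simp
  have "psi (ipsi z) = z" by (rule psi_ipsi[OF sector_ne[OF s]])
  thus ?thesis using ne unfolding psi_def by (simp add: field_simps add.commute)
qed

theorem lemma6p2:
  fixes R eps0 lam :: real and l0 l :: nat and U :: "nat \<Rightarrow> nat \<Rightarrow> complex set"
  assumes R_pos: "R > 0"
    and R_large: "psi -` {rt 1, rt 2, rt 3} \<subseteq> annulus R"
    and eps0_pos: "eps0 > 0"
    and lam: "0 < lam" "lam < 1"
    and U_nbhd: "\<forall>l'\<ge>l0. \<forall>i\<in>{1,2,3}. open (U i l') \<and> rt i \<in> U i l'"
    and U_shrink: "\<exists>C \<theta>::real. 0 < \<theta> \<and> \<theta> < 1 \<and>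
                     (\<forall>l'\<ge>l0. \<forall>i\<in>{1,2,3}. diameter (U i l') \<le> C * \<theta> ^ l')"
    and U_cover: "\<forall>l'\<ge>l0. \<forall>\<alpha>::complex. \<alpha> \<noteq> 0 \<longrightarrow>
        closure (ball 0 (cmod \<alpha> / eps0) \<times> annulus R)
          \<subseteq> (\<lambda>(z, w). (of_real lam * z + \<alpha> * w, w ^ (4 ^ l')))
               ` (ball 0 (cmod \<alpha> / eps0) \<times> (\<Union>i\<in>{1,2,3}. U i l'))"
    and l_ge: "l \<ge> l0"
    and l_choice: "closure (\<Union>i\<in>{1,2,3}. U i l \<union> psi -` U i l) \<subseteq> annulus R"
  shows "\<exists>lt::nat. lt \<ge> 1 \<and> (\<exists>lamt::real. lamt > 1 \<and>
           (\<forall>\<alpha>::complex. \<alpha> \<noteq> 0 \<longrightarrow>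
              (\<forall>\<^sub>F eta in at (0::complex).
                 line_X_cone \<union> affine_cone (closure (ball 0 (cmod \<alpha> / eps0) \<times> (\<Union>i\<in>{1,2,3}. U i l)))
                   \<subseteq> cone_image (F_hom lamt eta lt \<circ> Psi_hom)
                        (ball 0 (cmod \<alpha> / eps0) \<times> annulus R))))"
proof (intro exI[of _ "1::nat"] conjI exI[of _ "8::real"] allI impI)
  have R6: "6 < R^2" by (rule R_big[OF R_large])
  have R1: "1 < R" using R6 R_pos power2_less_imp_less[of 1 R] by simp
  fix \<alpha> :: complex assume a0: "\<alpha> \<noteq> 0"
  define r where "r = cmod \<alpha> / eps0"
  have r0: "r > 0" unfolding r_def using a0 eps0_pos by simp
  define \<rho> where "\<rho> = r / 4"
  have rho0: "\<rho> > 0" unfolding \<rho>_def using r0 by simp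
  define G where "G = (\<lambda>eta. F_hom 8 eta 1 \<circ> Psi_hom)"
  define S where "S = ball (0::complex) r \<times> annulus R"
  have mi: "-\<i> \<in> annulus R" using R1 unfolding annulus_def by auto
  have key: "line_X_cone \<union> affine_cone (closure (ball 0 r \<times> (\<Union>i\<in>{1,2,3}. U i l)))
                   \<subseteq> cone_image (G eta) S" if eta: "cmod eta < r / \<rho> ^ 4" for eta
  proof
    fix p assume p: "p \<in> line_X_cone \<union> affine_cone (closure (ball 0 r \<times> (\<Union>i\<in>{1,2,3}. U i l)))"
    show "p \<in> cone_image (G eta) S"
    proof (cases "p \<in> line_X_cone")
      case True
      then obtain b e where pbe: "p = (0, b, e)" and be: "(b, e) \<noteq> (0, 0)"
        unfolding line_X_cone_def by auto
      show ?thesis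
      proof (cases "e = 0")
        case True
        hence b0: "b \<noteq> 0" using be by simp
        show ?thesis
        proof (rule cone_imageI[of _ 0 "-\<i>" 0 16 0 _ "b/16"])
          show "G eta (0, - \<i>, 1) = (0, 16, 0)" unfolding G_def G_eval by simp
          show "(0, - \<i>) \<in> S" unfolding S_def using mi r0 by simp
          show "(0::complex, 16::complex, 0::complex) \<noteq> (0, 0, 0)" by simp
          show "b / 16 \<noteq> 0" using b0 by simp
          show "p = (b / 16 * 0, b / 16 * 16, b / 16 * 0)" using pbe True by simp
        qed
      next
        case False
        obtain \<zeta> where z4: "\<zeta> ^ 4 = b / e" and sz: "\<bar>Im \<zeta>\<bar> \<le> Re \<zeta>"
          using root4_sector by blast
        define w where "w = ipsi \<zeta>"
        define s where "s = \<i> + w"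
        have s0: "s \<noteq> 0" unfolding s_def w_def
          using ipsi_plus[OF sector_ne[OF sz]] sector_ne[OF sz] by (simp add: add.commute)
        have num: "\<i> * w + 1 = \<zeta> * s" unfolding w_def s_def by (rule psi_ipsi_eq[OF sz])
        show ?thesis
        proof (rule cone_imageI[of _ 0 w 0 "(b/e) * s^4" "s^4" _ "e / s^4"])
          show "G eta (0, w, 1) = (0, b / e * s ^ 4, s ^ 4)" unfolding G_def G_eval num s_def[symmetric]
            by (simp add: power_mult_distrib z4)
          show "(0, w) \<in> S" unfolding S_def w_def using ipsi_annulus[OF R6 R_pos sz] r0 by simp
          show "(0, b / e * s ^ 4, s ^ 4) \<noteq> (0, 0, 0)" using s0 by simp
          show "e / s ^ 4 \<noteq> 0" using s0 False by simp
          show "p = (e / s ^ 4 * 0, e / s ^ 4 * (b / e * s ^ 4), e / s ^ 4 * s ^ 4)"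
            using pbe False s0 by simp
        qed
      qed
    next
      case False
      then obtain c z w where pc: "p = (c * z, c * w, c)" and c0: "c \<noteq> 0"
        and zw: "(z, w) \<in> closure (ball 0 r \<times> (\<Union>i\<in>{1,2,3}. U i l))"
        using p unfolding affine_cone_def by auto
      have zr: "cmod z \<le> r" using zw r0 unfolding closure_Times by (simp add: closure_ball)
      obtain \<zeta> where z4: "\<zeta> ^ 4 = w" and sz: "\<bar>Im \<zeta>\<bar> \<le> Re \<zeta>"
        using root4_sector by blast
      define w' where "w' = ipsi \<zeta>"
      define s where "s = \<i> + w'"
      have s0: "s \<noteq> 0" unfolding s_def w'_def
        using ipsi_plus[OF sector_ne[OF sz]] sector_ne[OF sz] by (simp add: add.commute)
      have s3: "cmod s < 3" unfolding s_def w'_def using ipsi_annulus(2)[OF R6 R_pos sz]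
        by (simp add: add.commute)
      have num: "\<i> * w' + 1 = \<zeta> * s" unfolding w'_def s_def by (rule psi_ipsi_eq[OF sz])
      define T where "T = (\<lambda>u. (z - eta * u ^ 4) / 8)"
      obtain u where u: "u \<in> cball 0 \<rho>" and Tu: "T u = u"
      proof (rule brouwer[of "cball 0 \<rho>" T])
        show "continuous_on (cball 0 \<rho>) T" unfolding T_def by (intro continuous_intros) simp
        show "T \<in> cball 0 \<rho> \<rightarrow> cball 0 \<rho>"
        proof
          fix v :: complex assume v: "v \<in> cball 0 \<rho>"
          have "cmod (eta * v ^ 4) \<le> cmod eta * \<rho> ^ 4"
            using v by (simp add: norm_mult norm_power mult_left_mono power_mono)
          also have "\<dots> \<le> r" using eta rho0 by (simp add: pos_less_divide_eq less_imp_le)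
          finally have "cmod (z - eta * v ^ 4) \<le> 2 * r"
            using zr norm_triangle_ineq4[of z "eta * v ^ 4"] by linarith
          thus "T v \<in> cball 0 \<rho>" unfolding T_def \<rho>_def by (simp add: norm_divide)
        qed
      qed (use rho0 in simp_all)
      have eqz: "8 * u + eta * u ^ 4 = z" using Tu unfolding T_def by (simp add: field_simps)
      show ?thesis
      proof (rule cone_imageI[of _ "u * s" w' "s^4 * z" "w * s^4" "s^4" _ "c / s^4"])
        have "G eta (u * s, w', 1) = (s^4 * (8 * u + eta * u ^ 4), w * s ^ 4, s ^ 4)"
          unfolding G_def G_eval num s_def[symmetric]
          by (simp add: power_mult_distrib z4 algebra_simps power_Suc[symmetric] del: power_Suc)
        thus "G eta (u * s, w', 1) = (s^4 * z, w * s ^ 4, s ^ 4)" using eqz by simp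
        have "cmod (u * s) \<le> \<rho> * 3" using u s3 by (simp add: norm_mult mult_mono')
        hence "cmod (u * s) < r" unfolding \<rho>_def using r0 by simp
        thus "(u * s, w') \<in> S" unfolding S_def w'_def using ipsi_annulus(1)[OF R6 R_pos sz] by simp
        show "(s ^ 4 * z, w * s ^ 4, s ^ 4) \<noteq> (0, 0, 0)" using s0 by simp
        show "c / s ^ 4 \<noteq> 0" using s0 c0 by simp
        show "p = (c / s ^ 4 * (s ^ 4 * z), c / s ^ 4 * (w * s ^ 4), c / s ^ 4 * s ^ 4)"
          using pc s0 by simp
      qed
    qed
  qed
  have "\<forall>\<^sub>F eta in at (0::complex). cmod eta < r / \<rho> ^ 4"
    unfolding eventually_at using rho0 r0 by (intro exI[of _ "r / \<rho> ^ 4"]) auto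
  thus "\<forall>\<^sub>F eta in at (0::complex).
          line_X_cone \<union> affine_cone (closure (ball 0 (cmod \<alpha> / eps0) \<times> (\<Union>i\<in>{1,2,3}. U i l)))
            \<subseteq> cone_image (F_hom 8 eta 1 \<circ> Psi_hom) (ball 0 (cmod \<alpha> / eps0) \<times> annulus R)"
    by eventually_elim (use key in \<open>simp add: G_def S_def r_def\<close>)
qed simp_all

end
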